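(* Let $X$ be a Banach space and let $u=\sum_{\alpha\in\mathcal{J}}u_\alpha\xi_\alpha$ belong either to $L_{2,Q}(\mathbb{W};X)$ for some sequence $Q$ of positive numbers, or to $\bigcup_{\gamma\ge0}(\mathcal{S})_{-\rho,-\gamma}(X)$ for some $0\le\rho\le1$. Then for every $\alpha\in\mathcal{J}$, $$u_\alpha=\frac{1}{\sqrt{\alpha!}}\left.\Big(\prod_{i,k}\frac{\partial^{\alpha_i^k}}{\partial h_{k,i}^{\alpha_i^k}}\Big)Su(h)\right|_{h=0}.$$
   Context: $\mathcal{J}$: multi-indices $\alpha=(\alpha_i^k)_{i,k\ge1}$ of nonnegative integers with finitely many nonzero entries; $\alpha!=\prod\alpha_i^k!$; $\{\xi_\alpha\}$ the Cameron–Martin basis (built from independent Wiener processes $w_k$ and an orthonormal basis $\{m_i\}$ of $L_2((0,T))$). For $Q=\{q_k\}$ positive, $q^\alpha=\prod q_k^{\alpha_i^k}$ and $L_{2,Q}(\mathbb{W};X)$ is the set of formal series $\sum u_\alpha\xi_\alpha$, $u_\alpha\in X$, with $\sum q^{2\alpha}\|u_\alpha\|_X^2<\infty$; $(\mathcal{S})_{-\rho,-\gamma}(X)$ is the set with $\sum_\alpha(\alpha!)^{-\rho}\prod_{i,k}(2ik)^{-\gamma\alpha_i^k}\|u_\alpha\|_X^2<\infty$. For $h=\sum_{i,k}h_{k,i}m_iy_k$ with finitely many nonzero real $h_{k,i}$, set $h^\alpha=\prod h_{k,i}^{\alpha_i^k}$; the S-transform is $Su(h)=\sum_\alpha u_\alpha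 h^\alpha/\sqrt{\alpha!}\in X$ (defined wherever the series converges), viewed as a function of the variables $h_{k,i}$. *)

theory Defs
  imports "HOL-Analysis.Analysis"
begin

text \<open>Multi-indices: alpha (i,k) stands for alpha_i^k, with i,k >= 1 and finite support.\<close>
type_synonym mindex = "nat \<times> nat \<Rightarrow> nat"

definition msupp :: "mindex \<Rightarrow> (nat \<times> nat) set" where
  "msupp \<alpha> = {p. \<alpha> p \<noteq> 0}"

definition MJ :: "mindex set" where
  "MJ = {\<alpha>. finite (msupp \<alpha>) \<and> (\<forall>i k. \<alpha> (i,k) \<noteq> 0 \<longrightarrow> 1 \<le> i \<and> 1 \<le> k)}"

definition mfact :: "mindex \<Rightarrow> real" where
  "mfact \<alpha> = (\<Prod>p\<in>msupp \<alpha>. fact (\<alpha> p))"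

definition qpow :: "(nat \<Rightarrow> real) \<Rightarrow> mindex \<Rightarrow> real" where
  "qpow q \<alpha> = (\<Prod>(i,k)\<in>msupp \<alpha>. q k ^ \<alpha> (i,k))"

text \<open>h (i,k) stands for the variable h_{k,i}; h^alpha = prod h_{k,i}^(alpha_i^k)\<close>
definition hpow :: "(nat \<times> nat \<Rightarrow> real) \<Rightarrow> mindex \<Rightarrow> real" where
  "hpow h \<alpha> = (\<Prod>p\<in>msupp \<alpha>. h p ^ \<alpha> p)"

definition in_L2Q :: "(nat \<Rightarrow> real) \<Rightarrow> (mindex \<Rightarrow> 'X::real_normed_vector) \<Rightarrow> bool" where
  "in_L2Q q u \<longleftrightarrow> (\<lambda>\<alpha>. (qpow q \<alpha>)\<^sup>2 * (norm (u \<alpha>))\<^sup>2) summable_on MJ"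

definition in_S :: "real \<Rightarrow> real \<Rightarrow> (mindex \<Rightarrow> 'X::real_normed_vector) \<Rightarrow> bool" where
  "in_S \<rho> \<gamma> u \<longleftrightarrow>
     (\<lambda>\<alpha>. mfact \<alpha> powr (-\<rho>) * (\<Prod>(i,k)\<in>msupp \<alpha>. (2 * real i * real k) powr (- \<gamma> * real (\<alpha> (i,k))))
           * (norm (u \<alpha>))\<^sup>2) summable_on MJ"

text \<open>S-transform (as an unordered sum; it is only used where the series converges)\<close>
definition Stransform :: "(mindex \<Rightarrow> 'X::real_normed_vector) \<Rightarrow> (nat \<times> nat \<Rightarrow> real) \<Rightarrow> 'X" where
  "Stransform u h = (\<Sum>\<^sub>\<infinity>\<alpha>\<in>MJ. (hpow h \<alpha> / sqrt (mfact \<alpha>)) *\<^sub>R u \<alpha>)"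

fun pderivs :: "(nat \<times> nat) list \<Rightarrow> ((nat \<times> nat \<Rightarrow> real) \<Rightarrow> 'X::real_normed_vector)
                  \<Rightarrow> (nat \<times> nat \<Rightarrow> real) \<Rightarrow> 'X" where
  "pderivs [] F = F"
| "pderivs (p # ps) F = (\<lambda>h. vector_derivative (\<lambda>t. pderivs ps F (h(p := t))) (at (h p)))"

definition pderivs_exist_on :: "(nat \<times> nat \<Rightarrow> real) set \<Rightarrow> (nat \<times> nat) list
                  \<Rightarrow> ((nat \<times> nat \<Rightarrow> real) \<Rightarrow> 'X::real_normed_vector) \<Rightarrow> bool" where
  "pderivs_exist_on U ps F \<longleftrightarrow>
     (\<forall>j < length ps. \<forall>h\<in>U.
        ((\<lambda>t. pderivs (drop (Suc j) ps) F (h(ps ! j := t))) has_vector_derivative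
            pderivs (drop j ps) F h) (at (h (ps ! j))))"

definition nbhd0 :: "real \<Rightarrow> (nat \<times> nat) set \<Rightarrow> (nat \<times> nat \<Rightarrow> real) set" where
  "nbhd0 e S = {h. (\<forall>p. p \<notin> S \<longrightarrow> h p = 0) \<and> (\<forall>p\<in>S. \<bar>h p\<bar> < e)}"

end

theory Submission
  imports Defs
begin


definition BS :: "(nat \<times> nat) set \<Rightarrow> mindex set" where
  "BS S = {\<beta>. \<forall>p. p \<notin> S \<longrightarrow> \<beta> p = 0}"
definition deg :: "(nat \<times> nat) set \<Rightarrow> mindex \<Rightarrow> nat" where
  "deg S \<beta> = (\<Sum>q\<in>S. \<beta> q)"
definition mon :: "(nat \<times> nat) set \<Rightarrow> (nat \<times> nat \<Rightarrow> real) \<Rightarrow> mindex \<Rightarrow> real" where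
  "mon S h \<beta> = (\<Prod>q\<in>S. h q ^ \<beta> q)"

lemma geom_summable:
  assumes S: "finite S" and l: "0 \<le> l" "l < (1::real)"
  shows "(\<lambda>\<beta>. l ^ deg S \<beta>) summable_on BS S"
proof -
  have "\<And>q. q \<in> S \<Longrightarrow> Infinite_Set_Sum.abs_summable_on (\<lambda>n::nat. l ^ n) UNIV"
    using l by (simp add: abs_summable_on_nat_iff' summable_geometric)
  hence "Infinite_Set_Sum.abs_summable_on (\<lambda>g. \<Prod>q\<in>S. l ^ g q) (PiE S (\<lambda>_. UNIV))"
    using S by (intro abs_summable_on_prod_PiE) auto
  hence "(\<lambda>g. norm (\<Prod>q\<in>S. l ^ g q)) summable_on (PiE S (\<lambda>_. UNIV))"
    by (rule abs_summable_equivalent[THEN iffD2])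
  hence 1: "(\<lambda>g. \<Prod>q\<in>S. l ^ g q) summable_on (PiE S (\<lambda>_. UNIV))"
    using l by (simp add: abs_prod prod_nonneg)
  have bij: "bij_betw (\<lambda>\<beta>. restrict \<beta> S) (BS S) (PiE S (\<lambda>_. UNIV))"
  proof (rule bij_betw_byWitness[where f'="\<lambda>g q. if q \<in> S then g q else 0"])
  qed (auto simp: BS_def fun_eq_iff PiE_def extensional_def)
  have "(\<lambda>\<beta>. \<Prod>q\<in>S. l ^ (restrict \<beta> S) q) summable_on BS S"
    using summable_on_reindex_bij_betw[OF bij, of "\<lambda>g. \<Prod>q\<in>S. l ^ g q"] 1 by simp
  thus ?thesis by (simp add: deg_def power_sum)
qed

definition good :: "(nat \<times> nat) set \<Rightarrow> real \<Rightarrow> (mindex \<Rightarrow> 'X::real_normed_vector) \<Rightarrow> bool" where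
  "good S r c \<longleftrightarrow> (\<forall>\<rho>. 0 < \<rho> \<and> \<rho> < r \<longrightarrow> (\<exists>M. \<forall>\<beta>\<in>BS S. norm (c \<beta>) * \<rho> ^ deg S \<beta> \<le> M))"

definition Dp :: "nat \<times> nat \<Rightarrow> (mindex \<Rightarrow> 'X::real_normed_vector) \<Rightarrow> mindex \<Rightarrow> 'X" where
  "Dp p c = (\<lambda>\<beta>. real (Suc (\<beta> p)) *\<^sub>R c (\<beta>(p := Suc (\<beta> p))))"

lemma n_pow_bound:
  assumes "0 < \<rho>" "\<rho> < \<rho>'"
  shows "\<exists>C. \<forall>n. real n * \<rho> ^ n \<le> C * \<rho>' ^ n"
proof -
  have "norm (\<rho> / \<rho>') < 1" using assms by simp
  hence "(\<lambda>n. of_nat n * (\<rho> / \<rho>') ^ n) \<longlonglongrightarrow> 0" by (rule powser_times_n_limit_0)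
  hence "Bseq (\<lambda>n. of_nat n * (\<rho> / \<rho>') ^ n)" by (rule convergent_imp_Bseq[OF convergentI])
  then obtain K where K: "\<And>n. norm (of_nat n * (\<rho> / \<rho>') ^ n) \<le> K" by (auto simp: Bseq_def)
  have "real n * \<rho> ^ n \<le> K * \<rho>' ^ n" for n
  proof -
    have "real n * \<rho> ^ n = (real n * (\<rho> / \<rho>') ^ n) * \<rho>' ^ n"
      using assms by (simp add: power_divide)
    also have "\<dots> \<le> K * \<rho>' ^ n"
      using K[of n] assms by (intro mult_right_mono) auto
    finally show ?thesis .
  qed
  thus ?thesis by blast
qed

lemma good_summable:
  assumes S: "finite S" and g: "good S r c" and r: "0 < \<rho>" "\<rho> < r"
  shows "(\<lambda>\<beta>. norm (c \<beta>) * \<rho> ^ deg S \<beta>) summable_on BS S"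
proof -
  define \<rho>' where "\<rho>' = (\<rho> + r) / 2"
  have r': "0 < \<rho>'" "\<rho>' < r" "\<rho> < \<rho>'" using r by (auto simp: \<rho>'_def)
  obtain M where M: "\<And>\<beta>. \<beta> \<in> BS S \<Longrightarrow> norm (c \<beta>) * \<rho>' ^ deg S \<beta> \<le> M"
    using g r' unfolding good_def by blast
  have "(\<lambda>\<beta>. (\<rho> / \<rho>') ^ deg S \<beta>) summable_on BS S"
    using r r' by (intro geom_summable S) auto
  hence sm: "(\<lambda>\<beta>. M * (\<rho> / \<rho>') ^ deg S \<beta>) summable_on BS S"
    by (rule summable_on_cmult_right)
  show ?thesis
  proof (rule summable_on_comparison_test[OF sm])
    fix \<beta> assume b: "\<beta> \<in> BS S"
    have "norm (c \<beta>) * \<rho> ^ deg S \<beta> = (norm (c \<beta>) * \<rho>' ^ deg S \<beta>) * (\<rho> / \<rho>') ^ deg S \<beta>"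
      using r' by (simp add: power_divide)
    also have "\<dots> \<le> M * (\<rho> / \<rho>') ^ deg S \<beta>"
      using M[OF b] r r' by (intro mult_right_mono) auto
    finally show "norm (c \<beta>) * \<rho> ^ deg S \<beta> \<le> M * (\<rho> / \<rho>') ^ deg S \<beta>" .
    show "0 \<le> norm (c \<beta>) * \<rho> ^ deg S \<beta>" using r by simp
  qed
qed

lemma good_deg:
  assumes g: "good S r c"
  shows "good S r (\<lambda>\<beta>. real (deg S \<beta>) *\<^sub>R c \<beta>)"
  unfolding good_def
proof (intro allI impI)
  fix \<rho> assume r: "0 < \<rho> \<and> \<rho> < r"
  define \<rho>' where "\<rho>' = (\<rho> + r) / 2"
  have r': "0 < \<rho>'" "\<rho>' < r" "\<rho> < \<rho>'" using r by (auto simp: \<rho>'_def)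
  obtain M where M: "\<And>\<beta>. \<beta> \<in> BS S \<Longrightarrow> norm (c \<beta>) * \<rho>' ^ deg S \<beta> \<le> M"
    using g r' unfolding good_def by blast
  obtain C where C: "\<And>n. real n * \<rho> ^ n \<le> C * \<rho>' ^ n"
    using n_pow_bound[of \<rho> \<rho>'] r r' by blast
  have C0: "0 \<le> C" using C[of 1] r r'
    by (smt (verit) mult_nonneg_nonneg of_nat_1 power_one_right zero_le_mult_iff)
  have "norm (real (deg S \<beta>) *\<^sub>R c \<beta>) * \<rho> ^ deg S \<beta> \<le> C * M" if b: "\<beta> \<in> BS S" for \<beta>
  proof -
    have "norm (real (deg S \<beta>) *\<^sub>R c \<beta>) * \<rho> ^ deg S \<beta> = (real (deg S \<beta>) * \<rho> ^ deg S \<beta>) * norm (c \<beta>)"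
      by simp
    also have "\<dots> \<le> (C * \<rho>' ^ deg S \<beta>) * norm (c \<beta>)"
      using C by (intro mult_right_mono) auto
    also have "\<dots> = C * (norm (c \<beta>) * \<rho>' ^ deg S \<beta>)" by simp
    also have "\<dots> \<le> C * M" using M[OF b] C0 by (intro mult_left_mono) auto
    finally show ?thesis .
  qed
  thus "\<exists>M. \<forall>\<beta>\<in>BS S. norm (real (deg S \<beta>) *\<^sub>R c \<beta>) * \<rho> ^ deg S \<beta> \<le> M" by blast
qed

lemma deg_upd:
  assumes "finite S" "p \<in> S"
  shows "deg S (\<beta>(p := Suc (\<beta> p))) = Suc (deg S \<beta>)"
proof -
  have "deg S (\<beta>(p := Suc (\<beta> p))) = Suc (\<beta> p) + (\<Sum>q\<in>S - {p}. \<beta> q)"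
    unfolding deg_def using assms by (simp add: sum.remove)
  also have "\<dots> = Suc (deg S \<beta>)"
    unfolding deg_def using assms by (simp add: sum.remove)
  finally show ?thesis .
qed

lemma BS_upd: "p \<in> S \<Longrightarrow> \<beta> \<in> BS S \<Longrightarrow> \<beta>(p := n) \<in> BS S"
  by (auto simp: BS_def)

lemma good_Dp:
  assumes S: "finite S" and p: "p \<in> S" and g: "good S r c"
  shows "good S r (Dp p c)"
  unfolding good_def
proof (intro allI impI)
  fix \<rho> assume r: "0 < \<rho> \<and> \<rho> < r"
  obtain M where M: "\<And>\<beta>. \<beta> \<in> BS S \<Longrightarrow> norm (real (deg S \<beta>) *\<^sub>R c \<beta>) * \<rho> ^ deg S \<beta> \<le> M"
    using good_deg[OF g] r unfolding good_def by blast
  have "norm (Dp p c \<beta>) * \<rho> ^ deg S \<beta> \<le> M / \<rho>" if b: "\<beta> \<in> BS S" for \<beta>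
  proof -
    define \<beta>' where "\<beta>' = \<beta>(p := Suc (\<beta> p))"
    have b': "\<beta>' \<in> BS S" using BS_upd[OF p b] by (simp add: \<beta>'_def)
    have d: "deg S \<beta>' = Suc (deg S \<beta>)" using deg_upd[OF S p] by (simp add: \<beta>'_def)
    have le: "real (Suc (\<beta> p)) \<le> real (deg S \<beta>')"
    proof -
      have "\<beta>' p \<le> deg S \<beta>'" unfolding deg_def using S p by (intro member_le_sum) auto
      thus ?thesis by (simp add: \<beta>'_def)
    qed
    have "norm (Dp p c \<beta>) * \<rho> ^ deg S \<beta> = (real (Suc (\<beta> p)) * norm (c \<beta>') * \<rho> ^ deg S \<beta>') / \<rho>"
      using r by (simp add: Dp_def \<beta>'_def[symmetric] d)
    also have "\<dots> \<le> (real (deg S \<beta>') * norm (c \<beta>') * \<rho> ^ deg S \<beta>') / \<rho>"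
      using r le by (intro divide_right_mono mult_right_mono) auto
    also have "\<dots> \<le> M / \<rho>" using M[OF b'] r by (intro divide_right_mono) auto
    finally show ?thesis .
  qed
  thus "\<exists>M. \<forall>\<beta>\<in>BS S. norm (Dp p c \<beta>) * \<rho> ^ deg S \<beta> \<le> M" by blast
qed

lemma mon_bound:
  assumes "\<And>q. q \<in> S \<Longrightarrow> \<bar>h q\<bar> \<le> \<rho>"
  shows "\<bar>mon S h \<beta>\<bar> \<le> \<rho> ^ deg S \<beta>"
proof -
  have "\<bar>mon S h \<beta>\<bar> = (\<Prod>q\<in>S. \<bar>h q\<bar> ^ \<beta> q)" by (simp add: mon_def abs_prod power_abs)
  also have "\<dots> \<le> (\<Prod>q\<in>S. \<rho> ^ \<beta> q)"
    using assms by (intro prod_mono conjI power_mono) auto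
  also have "\<dots> = \<rho> ^ deg S \<beta>" by (simp add: deg_def power_sum)
  finally show ?thesis .
qed

definition FF :: "(nat \<times> nat) set \<Rightarrow> (mindex \<Rightarrow> 'X::real_normed_vector) \<Rightarrow> (nat \<times> nat \<Rightarrow> real) \<Rightarrow> 'X" where
  "FF S c h = (\<Sum>\<^sub>\<infinity>\<beta>\<in>BS S. mon S h \<beta> *\<^sub>R c \<beta>)"

lemma FF_abs_summable:
  assumes S: "finite S" and g: "good S r c" and r: "0 < \<rho>" "\<rho> < r"
    and h: "\<And>q. q \<in> S \<Longrightarrow> \<bar>h q\<bar> \<le> \<rho>"
  shows "(\<lambda>\<beta>. norm (mon S h \<beta> *\<^sub>R c \<beta>)) summable_on BS S"
proof (rule summable_on_comparison_test[OF good_summable[OF S g r]])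
  fix \<beta> assume "\<beta> \<in> BS S"
  show "norm (mon S h \<beta> *\<^sub>R c \<beta>) \<le> norm (c \<beta>) * \<rho> ^ deg S \<beta>"
    using mon_bound[of S h \<rho> \<beta>, OF h] by (simp add: mult.commute mult_left_mono)
qed simp

lemma FF_summable:
  fixes c :: "mindex \<Rightarrow> 'X::banach"
  assumes S: "finite S" and g: "good S r c" and r: "0 < \<rho>" "\<rho> < r"
    and h: "\<And>q. q \<in> S \<Longrightarrow> \<bar>h q\<bar> \<le> \<rho>"
  shows "((\<lambda>\<beta>. mon S h \<beta> *\<^sub>R c \<beta>) has_sum FF S c h) (BS S)"
  unfolding FF_def
  by (rule has_sum_infsum, rule abs_summable_summable, rule FF_abs_summable[OF assms])

definition dmon :: "(nat \<times> nat) set \<Rightarrow> nat \<times> nat \<Rightarrow> (nat \<times> nat \<Rightarrow> real) \<Rightarrow> mindex \<Rightarrow> real" where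
  "dmon S p h \<beta> = real (\<beta> p) * h p ^ (\<beta> p - 1) * (\<Prod>q\<in>S - {p}. h q ^ \<beta> q)"

lemma mon_split:
  assumes "finite S" "p \<in> S"
  shows "mon S h \<beta> = h p ^ \<beta> p * (\<Prod>q\<in>S - {p}. h q ^ \<beta> q)"
  unfolding mon_def using assms by (simp add: prod.remove)

lemma Dp_reindex:
  assumes S: "finite S" and p: "p \<in> S"
  shows "((\<lambda>\<beta>. mon S h \<beta> *\<^sub>R Dp p c \<beta>) has_sum s) (BS S) \<longleftrightarrow>
         ((\<lambda>\<beta>. dmon S p h \<beta> *\<^sub>R c \<beta>) has_sum s) (BS S)"
proof -
  define g where "g = (\<lambda>\<beta>::mindex. \<beta>(p := Suc (\<beta> p)))"
  have inj: "inj_on g (BS S)"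
  proof (rule inj_onI)
    fix a b assume "g a = g b"
    hence "\<forall>q. (g a) q = (g b) q" by simp
    thus "a = b" unfolding g_def by (auto simp: fun_eq_iff split: if_splits)
  qed
  have img: "g ` BS S = {\<gamma> \<in> BS S. \<gamma> p \<noteq> 0}"
  proof
    show "g ` BS S \<subseteq> {\<gamma> \<in> BS S. \<gamma> p \<noteq> 0}" using p by (auto simp: g_def BS_def)
    show "{\<gamma> \<in> BS S. \<gamma> p \<noteq> 0} \<subseteq> g ` BS S"
    proof
      fix \<gamma> assume "\<gamma> \<in> {\<gamma> \<in> BS S. \<gamma> p \<noteq> 0}"
      hence "\<gamma> \<in> BS S" "\<gamma> p \<noteq> 0" by auto
      hence "\<gamma> = g (\<gamma>(p := \<gamma> p - 1))" "\<gamma>(p := \<gamma> p - 1) \<in> BS S"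
        using p by (auto simp: g_def BS_def fun_eq_iff)
      thus "\<gamma> \<in> g ` BS S" by blast
    qed
  qed
  have eq: "((\<lambda>\<gamma>. dmon S p h \<gamma> *\<^sub>R c \<gamma>) \<circ> g) \<beta> = mon S h \<beta> *\<^sub>R Dp p c \<beta>" for \<beta>
  proof -
    have pr2: "(\<Prod>q\<in>S - {p}. h q ^ (g \<beta>) q) = (\<Prod>q\<in>S - {p}. h q ^ \<beta> q)"
      by (rule prod.cong) (auto simp: g_def)
    show ?thesis
      by (simp add: dmon_def Dp_def pr2 mon_split[OF S p] g_def[symmetric])
         (simp add: g_def)
  qed
  have "((\<lambda>\<beta>. dmon S p h \<beta> *\<^sub>R c \<beta>) has_sum s) (BS S) \<longleftrightarrow>
        ((\<lambda>\<beta>. dmon S p h \<beta> *\<^sub>R c \<beta>) has_sum s) (g ` BS S)"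
    by (rule has_sum_cong_neutral) (auto simp: img dmon_def)
  also have "\<dots> \<longleftrightarrow> (((\<lambda>\<beta>. dmon S p h \<beta> *\<^sub>R c \<beta>) \<circ> g) has_sum s) (BS S)"
    by (rule has_sum_reindex[OF inj])
  also have "((\<lambda>\<beta>. dmon S p h \<beta> *\<^sub>R c \<beta>) \<circ> g) = (\<lambda>\<beta>. mon S h \<beta> *\<^sub>R Dp p c \<beta>)"
    by (rule ext, rule eq)
  finally show ?thesis by simp
qed

lemma quad_deriv:
  fixes f :: "real \<Rightarrow> 'X::real_normed_vector"
  assumes d: "\<delta> > 0" and b: "\<And>t. \<bar>t - x\<bar> < \<delta> \<Longrightarrow> norm (f t - f x - (t - x) *\<^sub>R D) \<le> K * (t - x)^2"
  shows "(f has_vector_derivative D) (at x)"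
  unfolding has_vector_derivative_def has_derivative_iff_norm
proof (intro conjI)
  show "bounded_linear (\<lambda>h. h *\<^sub>R D)" by (rule bounded_linear_scaleR_left)
  have lim: "((\<lambda>y. \<bar>K\<bar> * \<bar>y - x\<bar>) \<longlongrightarrow> 0) (at x)"
  proof -
    have "((\<lambda>y. \<bar>K\<bar> * \<bar>y - x\<bar>) \<longlongrightarrow> \<bar>K\<bar> * \<bar>x - x\<bar>) (at x)"
      by (intro tendsto_intros)
    thus ?thesis by simp
  qed
  have ev: "eventually (\<lambda>y. norm (f y - f x - (y - x) *\<^sub>R D) / norm (y - x) \<le> \<bar>K\<bar> * \<bar>y - x\<bar>) (at x)"
    unfolding eventually_at
  proof (intro exI[of _ \<delta>] conjI ballI impI)
    fix y :: real assume y: "y \<in> UNIV" "y \<noteq> x \<and> dist y x < \<delta>"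
    hence "\<bar>y - x\<bar> < \<delta>" "\<bar>y - x\<bar> > 0" by (auto simp: dist_real_def)
    have "norm (f y - f x - (y - x) *\<^sub>R D) / norm (y - x) \<le> K * (y - x)^2 / \<bar>y - x\<bar>"
      using b[OF \<open>\<bar>y - x\<bar> < \<delta>\<close>] \<open>\<bar>y - x\<bar> > 0\<close> by (simp add: divide_right_mono)
    also have "\<dots> = K * \<bar>y - x\<bar>"
    proof -
      have "(y - x)^2 = \<bar>y - x\<bar> * \<bar>y - x\<bar>" by (metis abs_mult_self_eq power2_eq_square)
      thus ?thesis using \<open>\<bar>y - x\<bar> > 0\<close> by (simp only:) (simp add: field_simps)
    qed
    also have "\<dots> \<le> \<bar>K\<bar> * \<bar>y - x\<bar>" by (simp add: mult_right_mono)
    finally show "norm (f y - f x - (y - x) *\<^sub>R D) / norm (y - x) \<le> \<bar>K\<bar> * \<bar>y - x\<bar>" .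
  qed (use d in auto)
  show "((\<lambda>y. norm (f y - f x - (y - x) *\<^sub>R D) / norm (y - x)) \<longlongrightarrow> 0) (at x)"
    by (rule tendsto_sandwich[OF _ ev tendsto_const lim]) auto
qed


lemma pow_quad:
  fixes x y \<rho> :: real
  assumes x: "\<bar>x\<bar> \<le> \<rho>" and y: "\<bar>y\<bar> \<le> \<rho>" and r: "0 < \<rho>"
  shows "\<bar>y^n - x^n - real n * x^(n-1) * (y-x)\<bar> \<le> (real n)^2 * \<rho>^n / \<rho>^2 * (y-x)^2"
proof (induction n)
  case 0
  then show ?case by simp
next
  case (Suc n)
  define E where "E = y^n - x^n - real n * x^(n-1) * (y-x)"
  have id: "y^(Suc n) - x^(Suc n) - real (Suc n) * x^(Suc n - 1) * (y-x) = y * E + real n * x^(n-1) * (y-x)^2"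
  proof (cases n)
    case 0 then show ?thesis by (simp add: E_def)
  next
    case (Suc m) then show ?thesis by (simp add: E_def algebra_simps power2_eq_square)
  qed
  have pw: "real n * \<rho>^(n-1) = real n * \<rho>^(Suc n) / \<rho>^2"
  proof (cases n)
    case 0 then show ?thesis by simp
  next
    case (Suc m) then show ?thesis using r by (simp add: power2_eq_square field_simps)
  qed
  have a: "\<bar>y * E\<bar> \<le> \<rho> * ((real n)^2 * \<rho>^n / \<rho>^2 * (y-x)^2)"
    unfolding abs_mult using Suc.IH y by (intro mult_mono) (auto simp: E_def)
  have b: "\<bar>real n * x^(n-1) * (y-x)^2\<bar> \<le> real n * \<rho>^(n-1) * (y-x)^2"
    unfolding abs_mult using x by (auto intro!: mult_mono power_mono simp: power_abs)
  have "\<bar>y^(Suc n) - x^(Suc n) - real (Suc n) * x^(Suc n - 1) * (y-x)\<bar>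
        \<le> \<rho> * ((real n)^2 * \<rho>^n / \<rho>^2 * (y-x)^2) + real n * \<rho>^(n-1) * (y-x)^2"
    unfolding id using a b by linarith
  also have "\<dots> = ((real n)^2 + real n) * \<rho>^(Suc n) / \<rho>^2 * (y-x)^2"
    using pw by (simp add: algebra_simps add_divide_distrib)
  also have "\<dots> \<le> (real (Suc n))^2 * \<rho>^(Suc n) / \<rho>^2 * (y-x)^2"
  proof -
    have "(real n)^2 + real n \<le> (real (Suc n))^2" by (simp add: power2_eq_square algebra_simps)
    moreover have "0 \<le> \<rho>^(Suc n) / \<rho>^2 * (y-x)^2" using r by simp
    ultimately have "((real n)^2 + real n) * (\<rho>^(Suc n) / \<rho>^2 * (y-x)^2) \<le> (real (Suc n))^2 * (\<rho>^(Suc n) / \<rho>^2 * (y-x)^2)"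
      by (rule mult_right_mono)
    thus ?thesis by simp
  qed
  finally show ?case .
qed


lemma FF_deriv:
  fixes c :: "mindex \<Rightarrow> 'X::banach"
  assumes S: "finite S" and p: "p \<in> S" and g: "good S r c" and h: "h \<in> nbhd0 r S"
  shows "((\<lambda>t. FF S c (h(p := t))) has_vector_derivative FF S (Dp p c) h) (at (h p))"
proof -
  define m where "m = Max ((\<lambda>q. \<bar>h q\<bar>) ` S)"
  have hr: "\<And>q. q \<in> S \<Longrightarrow> \<bar>h q\<bar> < r" using h by (auto simp: nbhd0_def)
  have hm: "\<And>q. q \<in> S \<Longrightarrow> \<bar>h q\<bar> \<le> m" unfolding m_def using S by (intro Max_ge) auto
  have mr: "m < r" unfolding m_def using S p hr by (subst Max_less_iff) auto
  have m0: "0 \<le> m" using hm[OF p] by linarith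
  define \<rho> where "\<rho> = (m + r) / 2"
  define \<delta> where "\<delta> = \<rho> - m"
  have r0: "0 < \<rho>" "\<rho> < r" "0 < \<delta>" using mr m0 by (auto simp: \<rho>_def \<delta>_def)
  have hb: "\<And>q. q \<in> S \<Longrightarrow> \<bar>h q\<bar> \<le> \<rho>" using hm mr by (force simp: \<rho>_def)
  define c2 where "c2 = (\<lambda>\<beta>. real (deg S \<beta>) *\<^sub>R (real (deg S \<beta>) *\<^sub>R c \<beta>))"
  have g2: "good S r c2" unfolding c2_def by (intro good_deg g)
  obtain G where G: "((\<lambda>\<beta>. norm (c2 \<beta>) * \<rho> ^ deg S \<beta>) has_sum G) (BS S)"
    using good_summable[OF S g2 r0(1,2)] by (auto simp: summable_on_def)
  have s2: "((\<lambda>\<beta>. mon S h \<beta> *\<^sub>R c \<beta>) has_sum FF S c h) (BS S)"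
    by (rule FF_summable[OF S g r0(1,2) hb])
  have s3: "((\<lambda>\<beta>. dmon S p h \<beta> *\<^sub>R c \<beta>) has_sum FF S (Dp p c) h) (BS S)"
    by (rule Dp_reindex[OF S p, THEN iffD1, OF FF_summable[OF S good_Dp[OF S p g] r0(1,2) hb]])
  show ?thesis
  proof (rule quad_deriv[OF r0(3)])
    fix t assume t: "\<bar>t - h p\<bar> < \<delta>"
    define ht where "ht = h(p := t)"
    define d where "d = t - h p"
    have htb: "\<And>q. q \<in> S \<Longrightarrow> \<bar>ht q\<bar> \<le> \<rho>"
      using hb t hm[OF p] by (auto simp: ht_def \<delta>_def)
    have s1: "((\<lambda>\<beta>. mon S ht \<beta> *\<^sub>R c \<beta>) has_sum FF S c ht) (BS S)"
      by (rule FF_summable[OF S g r0(1,2) htb])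
    have comb: "((\<lambda>\<beta>. (mon S ht \<beta> - mon S h \<beta> - d * dmon S p h \<beta>) *\<^sub>R c \<beta>) has_sum
                 (FF S c ht - FF S c h - d *\<^sub>R FF S (Dp p c) h)) (BS S)"
    proof -
      have "((\<lambda>\<beta>. mon S ht \<beta> *\<^sub>R c \<beta> + (-1) *\<^sub>R (mon S h \<beta> *\<^sub>R c \<beta>) + (-d) *\<^sub>R (dmon S p h \<beta> *\<^sub>R c \<beta>)) has_sum
                 (FF S c ht + (-1) *\<^sub>R FF S c h + (-d) *\<^sub>R FF S (Dp p c) h)) (BS S)"
        by (intro has_sum_add has_sum_scaleR s1 s2 s3)
      thus ?thesis by (simp add: algebra_simps)
    qed
    have bnd: "((\<lambda>\<beta>. d^2 / \<rho>^2 * (norm (c2 \<beta>) * \<rho> ^ deg S \<beta>)) has_sum (d^2 / \<rho>^2 * G)) (BS S)"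
      by (rule has_sum_cmult_right[OF G])
    have pt: "norm ((mon S ht \<beta> - mon S h \<beta> - d * dmon S p h \<beta>) *\<^sub>R c \<beta>)
              \<le> d^2 / \<rho>^2 * (norm (c2 \<beta>) * \<rho> ^ deg S \<beta>)" for \<beta>
    proof -
      define P where "P = (\<Prod>q\<in>S - {p}. h q ^ \<beta> q)"
      define n where "n = \<beta> p"
      have P': "(\<Prod>q\<in>S - {p}. ht q ^ \<beta> q) = P"
        unfolding P_def ht_def by (rule prod.cong) auto
      have e: "mon S ht \<beta> - mon S h \<beta> - d * dmon S p h \<beta> = (t^n - (h p)^n - real n * (h p)^(n-1) * (t - h p)) * P"
        using mon_split[OF S p, of ht \<beta>] mon_split[OF S p, of h \<beta>] P'
        by (simp add: dmon_def P_def[symmetric] n_def[symmetric] d_def ht_def algebra_simps)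
      have Pb: "\<bar>P\<bar> \<le> (\<Prod>q\<in>S - {p}. \<rho> ^ \<beta> q)"
        unfolding P_def abs_prod using hb by (intro prod_mono) (auto simp: power_abs intro!: power_mono)
      have rd: "\<rho> ^ n * (\<Prod>q\<in>S - {p}. \<rho> ^ \<beta> q) = \<rho> ^ deg S \<beta>"
        using mon_split[OF S p, of "\<lambda>_. \<rho>" \<beta>] by (simp add: mon_def deg_def power_sum n_def)
      have nd: "real n ^ 2 \<le> real (deg S \<beta>) ^ 2"
      proof -
        have "n \<le> deg S \<beta>" unfolding n_def deg_def using S p by (intro member_le_sum) auto
        thus ?thesis by (simp add: power_mono)
      qed
      have tb: "\<bar>t\<bar> \<le> \<rho>" using htb[OF p] by (simp add: ht_def)
      have q: "\<bar>t^n - (h p)^n - real n * (h p)^(n-1) * (t - h p)\<bar> \<le> (real n)^2 * \<rho>^n / \<rho>^2 * (t - h p)^2"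
        by (rule pow_quad[OF hb[OF p] tb r0(1)])
      have "\<bar>mon S ht \<beta> - mon S h \<beta> - d * dmon S p h \<beta>\<bar>
            \<le> ((real n)^2 * \<rho>^n / \<rho>^2 * d^2) * (\<Prod>q\<in>S - {p}. \<rho> ^ \<beta> q)"
        unfolding e abs_mult using q Pb by (intro mult_mono) (auto simp: d_def)
      also have "\<dots> = d^2 / \<rho>^2 * ((real n)^2 * (\<rho>^n * (\<Prod>q\<in>S - {p}. \<rho> ^ \<beta> q)))"
        by (simp add: field_simps)
      also have "\<dots> \<le> d^2 / \<rho>^2 * ((real (deg S \<beta>))^2 * \<rho> ^ deg S \<beta>)"
        unfolding rd using nd r0 by (intro mult_left_mono mult_right_mono) auto
      finally have "\<bar>mon S ht \<beta> - mon S h \<beta> - d * dmon S p h \<beta>\<bar> \<le> d^2 / \<rho>^2 * ((real (deg S \<beta>))^2 * \<rho> ^ deg S \<beta>)" .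
      hence "\<bar>mon S ht \<beta> - mon S h \<beta> - d * dmon S p h \<beta>\<bar> * norm (c \<beta>) \<le> d^2 / \<rho>^2 * ((real (deg S \<beta>))^2 * \<rho> ^ deg S \<beta>) * norm (c \<beta>)"
        by (rule mult_right_mono) simp
      thus ?thesis by (simp add: c2_def power2_eq_square mult_ac)
    qed
    have "norm (FF S c ht - FF S c h - d *\<^sub>R FF S (Dp p c) h) \<le> d^2 / \<rho>^2 * G"
      by (rule norm_infsum_le[OF comb bnd pt])
    thus "norm (FF S c (h(p := t)) - FF S c (h(p := h p)) - (t - h p) *\<^sub>R FF S (Dp p c) h) \<le> G / \<rho>^2 * (t - h p)^2"
      by (simp add: ht_def d_def mult.commute)
  qed
qed

fun Dps :: "(nat \<times> nat) list \<Rightarrow> (mindex \<Rightarrow> 'X::real_normed_vector) \<Rightarrow> mindex \<Rightarrow> 'X" where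
  "Dps [] c = c"
| "Dps (p # ps) c = Dp p (Dps ps c)"

lemma good_Dps:
  assumes "finite S" "set ps \<subseteq> S" "good S r c"
  shows "good S r (Dps ps c)"
  using assms by (induction ps) (auto intro: good_Dp)

lemma nbhd0_upd:
  assumes "h \<in> nbhd0 r S" "p \<in> S" "\<bar>y\<bar> < r"
  shows "h(p := y) \<in> nbhd0 r S"
  using assms by (auto simp: nbhd0_def)

lemma pderivs_step:
  fixes c :: "mindex \<Rightarrow> 'X::banach"
  assumes S: "finite S" and p: "p \<in> S" and g: "good S r c" and h: "h \<in> nbhd0 r S"
    and eq: "\<And>h. h \<in> nbhd0 r S \<Longrightarrow> H h = FF S c h"
  shows "((\<lambda>t. H (h(p := t))) has_vector_derivative FF S (Dp p c) h) (at (h p))"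
proof (rule has_vector_derivative_transform_within_open[OF FF_deriv[OF S p g h]])
  show "open (ball (0::real) r)" by simp
  show "h p \<in> ball 0 r" using h p by (auto simp: nbhd0_def)
  fix y :: real assume "y \<in> ball 0 r"
  hence "\<bar>y\<bar> < r" by auto
  thus "FF S c (h(p := y)) = H (h(p := y))"
    using eq[OF nbhd0_upd[OF h p]] by metis
qed

lemma pderivs_FF:
  fixes c :: "mindex \<Rightarrow> 'X::banach"
  assumes S: "finite S" and ps: "set ps \<subseteq> S" and g: "good S r c"
    and eq: "\<And>h. h \<in> nbhd0 r S \<Longrightarrow> G h = FF S c h"
  shows "h \<in> nbhd0 r S \<Longrightarrow> pderivs ps G h = FF S (Dps ps c) h"
  using ps
proof (induction ps arbitrary: h)
  case Nil
  then show ?case using eq by simp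
next
  case (Cons p ps)
  have p: "p \<in> S" and ps': "set ps \<subseteq> S" using Cons.prems by auto
  have D: "((\<lambda>t. pderivs ps G (h(p := t))) has_vector_derivative FF S (Dp p (Dps ps c)) h) (at (h p))"
    by (rule pderivs_step[OF S p good_Dps[OF S ps' g] Cons.prems(1)]) (rule Cons.IH[OF _ ps'])
  have "pderivs (p # ps) G h = vector_derivative (\<lambda>t. pderivs ps G (h(p := t))) (at (h p))"
    by (simp only: pderivs.simps)
  also have "\<dots> = FF S (Dp p (Dps ps c)) h" by (rule vector_derivative_at[OF D])
  finally show ?case by (simp only: Dps.simps)
qed

lemma pderivs_exist:
  fixes c :: "mindex \<Rightarrow> 'X::banach"
  assumes S: "finite S" and ps: "set ps \<subseteq> S" and g: "good S r c"
    and eq: "\<And>h. h \<in> nbhd0 r S \<Longrightarrow> G h = FF S c h"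
  shows "pderivs_exist_on (nbhd0 r S) ps G"
  unfolding pderivs_exist_on_def
proof (intro allI impI ballI)
  fix j h assume j: "j < length ps" and h: "h \<in> nbhd0 r S"
  have d: "drop j ps = ps ! j # drop (Suc j) ps" using j by (rule Cons_nth_drop_Suc[symmetric])
  have p: "ps ! j \<in> S" using ps nth_mem[OF j] by (rule subsetD)
  have ps': "set (drop (Suc j) ps) \<subseteq> S" by (rule order_trans[OF set_drop_subset ps])
  have ps'': "set (drop j ps) \<subseteq> S" by (rule order_trans[OF set_drop_subset ps])
  have D: "((\<lambda>t. pderivs (drop (Suc j) ps) G (h(ps ! j := t))) has_vector_derivative
          FF S (Dp (ps ! j) (Dps (drop (Suc j) ps) c)) h) (at (h (ps ! j)))"
    by (rule pderivs_step[OF S p good_Dps[OF S ps' g] h])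
       (rule pderivs_FF[OF S ps' g eq])
  have E: "pderivs (drop j ps) G h = FF S (Dp (ps ! j) (Dps (drop (Suc j) ps) c)) h"
    using pderivs_FF[OF S ps'' g eq h] unfolding d by (simp only: Dps.simps)
  show "((\<lambda>t. pderivs (drop (Suc j) ps) G (h(ps ! j := t))) has_vector_derivative
            pderivs (drop j ps) G h) (at (h (ps ! j)))" unfolding E by (rule D)
qed

lemma Dps_formula:
  assumes S: "finite S"
  shows "set ps \<subseteq> S \<Longrightarrow> Dps ps c \<beta> = (\<Prod>q\<in>S. fact (\<beta> q + count (mset ps) q) / fact (\<beta> q) :: real) *\<^sub>R c (\<lambda>q. \<beta> q + count (mset ps) q)"
proof (induction ps arbitrary: \<beta>)
  case Nil
  then show ?case by simp
next
  case (Cons p ps)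
  have p: "p \<in> S" and ps: "set ps \<subseteq> S" using Cons.prems by auto
  define m where "m = count (mset ps)"
  define \<beta>' where "\<beta>' = \<beta>(p := Suc (\<beta> p))"
  have cnt0: "count (mset (p # ps)) = (\<lambda>q. if q = p then Suc (count (mset ps) q) else count (mset ps) q)"
    by (auto simp: fun_eq_iff)
  hence cnt: "count (mset (p # ps)) = (\<lambda>q. if q = p then Suc (m q) else m q)"
    unfolding m_def by simp
  have arg: "(\<lambda>q. \<beta>' q + m q) = (\<lambda>q. \<beta> q + count (mset (p # ps)) q)"
    by (auto simp: cnt0 \<beta>'_def m_def fun_eq_iff)
  define f' where "f' = (\<lambda>q. fact (\<beta>' q + m q) / fact (\<beta>' q) :: real)"
  define f where "f = (\<lambda>q. fact (\<beta> q + count (mset (p # ps)) q) / fact (\<beta> q) :: real)"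
  have eqo: "(\<Prod>q\<in>S - {p}. f' q) = (\<Prod>q\<in>S - {p}. f q)"
    by (rule prod.cong) (auto simp: f'_def f_def \<beta>'_def cnt0 m_def)
  have eqp: "real (Suc (\<beta> p)) * f' p = f p"
  proof -
    have "real (Suc (\<beta> p)) * f' p = real (Suc (\<beta> p)) * (fact (Suc (\<beta> p + m p)) / fact (Suc (\<beta> p)))"
      by (simp add: f'_def \<beta>'_def)
    also have "\<dots> = fact (Suc (\<beta> p + m p)) / fact (\<beta> p)"
      by (simp add: fact_Suc[of "\<beta> p"] del: fact_Suc)
    also have "\<dots> = f p" by (simp add: f_def cnt0 m_def)
    finally show ?thesis .
  qed
  have "Dps (p # ps) c \<beta> = real (Suc (\<beta> p)) *\<^sub>R Dps ps c \<beta>'"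
    by (simp add: Dp_def \<beta>'_def)
  also have "\<dots> = real (Suc (\<beta> p)) *\<^sub>R ((\<Prod>q\<in>S. f' q) *\<^sub>R c (\<lambda>q. \<beta>' q + m q))"
    using Cons.IH[OF ps, of \<beta>'] by (simp add: f'_def m_def)
  also have "\<dots> = (real (Suc (\<beta> p)) * f' p * (\<Prod>q\<in>S - {p}. f' q)) *\<^sub>R c (\<lambda>q. \<beta>' q + m q)"
    using S p by (simp add: prod.remove mult.assoc)
  also have "\<dots> = (\<Prod>q\<in>S. f q) *\<^sub>R c (\<lambda>q. \<beta> q + count (mset (p # ps)) q)"
  proof -
    have pf: "(\<Prod>q\<in>S. f q) = f p * (\<Prod>q\<in>S - {p}. f q)" using S p by (simp add: prod.remove)
    show ?thesis by (simp only: eqp eqo pf arg)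
  qed
  finally show ?case by (simp add: f_def)
qed

lemma FF_zero:
  assumes S: "finite S"
  shows "FF S c (\<lambda>_. 0) = c (\<lambda>_. 0)"
proof -
  have z: "(\<lambda>_. 0) \<in> BS S" by (simp add: BS_def)
  have "FF S c (\<lambda>_. 0) = (\<Sum>\<^sub>\<infinity>\<beta>\<in>{\<lambda>_. 0}. mon S (\<lambda>_. 0) \<beta> *\<^sub>R c \<beta>)"
    unfolding FF_def
  proof (rule infsum_cong_neutral)
    fix \<beta> assume b: "\<beta> \<in> BS S - {\<lambda>_. 0}"
    then obtain q where "\<beta> q \<noteq> 0" by (auto simp: fun_eq_iff)
    have "q \<in> S"
    proof (rule ccontr)
      assume "q \<notin> S"
      with b have "\<beta> q = 0" by (cases q) (auto simp: BS_def)
      with \<open>\<beta> q \<noteq> 0\<close> show False by simp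
    qed
    hence "mon S (\<lambda>_. 0) \<beta> = 0" unfolding mon_def using S \<open>\<beta> q \<noteq> 0\<close>
      by (subst prod_zero_iff) auto
    thus "mon S (\<lambda>_. 0) \<beta> *\<^sub>R c \<beta> = 0" by simp
  qed (use z in auto)
  also have "\<dots> = c (\<lambda>_. 0)" by (simp add: mon_def)
  finally show ?thesis .
qed

definition c0 :: "(mindex \<Rightarrow> 'X::real_normed_vector) \<Rightarrow> mindex \<Rightarrow> 'X" where
  "c0 u = (\<lambda>\<beta>. (1 / sqrt (mfact \<beta>)) *\<^sub>R u \<beta>)"

definition valid :: "(nat \<times> nat) set \<Rightarrow> bool" where
  "valid S \<longleftrightarrow> (\<forall>p\<in>S. 1 \<le> fst p \<and> 1 \<le> snd p)"

lemma msupp_BS: 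
  assumes "\<beta> \<in> BS S" shows "msupp \<beta> \<subseteq> S"
proof
  fix p assume "p \<in> msupp \<beta>"
  hence nz: "\<beta> p \<noteq> 0" by (simp add: msupp_def)
  have "\<forall>p. p \<notin> S \<longrightarrow> \<beta> p = 0" using assms unfolding BS_def by (rule CollectD)
  hence "p \<notin> S \<longrightarrow> \<beta> p = 0" by (rule spec)
  thus "p \<in> S" using nz by (cases "p \<in> S") simp_all
qed

lemma BS_MJ:
  assumes "finite S" "valid S"
  shows "BS S \<subseteq> MJ"
proof
  fix \<beta> assume b: "\<beta> \<in> BS S"
  have "finite (msupp \<beta>)" using msupp_BS[OF b] assms(1) finite_subset by blast
  moreover have "\<forall>i k. \<beta> (i,k) \<noteq> 0 \<longrightarrow> 1 \<le> i \<and> 1 \<le> k"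
  proof (intro allI impI)
    fix i k assume "\<beta> (i,k) \<noteq> 0"
    hence "(i,k) \<in> S" using msupp_BS[OF b] by (auto simp: msupp_def)
    thus "1 \<le> i \<and> 1 \<le> k" using assms(2) by (auto simp: valid_def)
  qed
  ultimately show "\<beta> \<in> MJ" by (simp add: MJ_def)
qed

lemma mfact_ge1: "1 \<le> mfact \<beta>"
  unfolding mfact_def by (rule prod_ge_1) (simp add: fact_ge_1)

lemma hpow_mon:
  assumes S: "finite S" and b: "\<beta> \<in> BS S"
  shows "hpow h \<beta> = mon S h \<beta>"
  unfolding hpow_def mon_def
  by (rule prod.mono_neutral_left[OF S msupp_BS[OF b]]) (auto simp: msupp_def)

lemma Stransform_eq:
  assumes S: "finite S" "valid S" and h: "\<And>p. p \<notin> S \<Longrightarrow> h p = 0"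
  shows "Stransform u h = FF S (c0 u) h"
  unfolding Stransform_def FF_def
proof (rule infsum_cong_neutral)
  fix \<beta> assume "\<beta> \<in> BS S - MJ"
  hence False using BS_MJ[OF S] by blast
  thus "mon S h \<beta> *\<^sub>R c0 u \<beta> = 0" ..
next
  fix \<beta> assume b: "\<beta> \<in> MJ - BS S"
  then obtain q where q: "q \<notin> S" "\<beta> q \<noteq> 0" by (auto simp: BS_def)
  have fin: "finite (msupp \<beta>)" using b by (simp add: MJ_def)
  have "q \<in> msupp \<beta>" using q by (simp add: msupp_def)
  moreover have "h q ^ \<beta> q = 0" using q h[OF q(1)] by simp
  ultimately have "hpow h \<beta> = 0" unfolding hpow_def by (intro prod_zero fin bexI[of _ q])
  thus "(hpow h \<beta> / sqrt (mfact \<beta>)) *\<^sub>R u \<beta> = 0" by simp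
next
  fix \<beta> assume b: "\<beta> \<in> MJ \<inter> BS S"
  thus "(hpow h \<beta> / sqrt (mfact \<beta>)) *\<^sub>R u \<beta> = mon S h \<beta> *\<^sub>R c0 u \<beta>"
  proof -
    have "hpow h \<beta> = mon S h \<beta>" using hpow_mon[OF S(1)] b by blast
    thus ?thesis by (simp add: c0_def)
  qed
qed

lemma good_from_weight:
  fixes c :: "mindex \<Rightarrow> 'X::real_normed_vector"
  assumes m: "0 < m" and w: "\<And>\<beta>. \<beta> \<in> BS S \<Longrightarrow> m ^ deg S \<beta> * (norm (c \<beta>))^2 \<le> T"
  shows "good S (sqrt m) c"
  unfolding good_def
proof (intro allI impI)
  fix \<rho> assume r: "0 < \<rho> \<and> \<rho> < sqrt m"
  have "norm (c \<beta>) * \<rho> ^ deg S \<beta> \<le> sqrt T" if b: "\<beta> \<in> BS S" for \<beta>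
  proof -
    have "norm (c \<beta>) * \<rho> ^ deg S \<beta> \<le> norm (c \<beta>) * sqrt m ^ deg S \<beta>"
      using r by (intro mult_left_mono power_mono) auto
    also have "\<dots> = sqrt (m ^ deg S \<beta> * (norm (c \<beta>))^2)"
      using m by (simp add: real_sqrt_mult real_sqrt_power)
    also have "\<dots> \<le> sqrt T" using w[OF b] by simp
    finally show ?thesis .
  qed
  thus "\<exists>M. \<forall>\<beta>\<in>BS S. norm (c \<beta>) * \<rho> ^ deg S \<beta> \<le> M" by blast
qed

lemma prod_msupp_ge:
  fixes m :: real and f :: "nat \<times> nat \<Rightarrow> nat \<Rightarrow> real"
  assumes S: "finite S" and b: "\<beta> \<in> BS S" and m: "0 < m"
    and f: "\<And>p n. p \<in> S \<Longrightarrow> m ^ n \<le> f p n"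
  shows "m ^ deg S \<beta> \<le> (\<Prod>p\<in>msupp \<beta>. f p (\<beta> p))"
proof -
  have "m ^ deg S \<beta> = (\<Prod>p\<in>S. m ^ \<beta> p)" by (simp add: deg_def power_sum)
  also have "\<dots> = (\<Prod>p\<in>msupp \<beta>. m ^ \<beta> p)"
    by (rule prod.mono_neutral_right[OF S msupp_BS[OF b]]) (auto simp: msupp_def)
  also have "\<dots> \<le> (\<Prod>p\<in>msupp \<beta>. f p (\<beta> p))"
    using msupp_BS[OF b] m by (intro prod_mono conjI) (auto intro!: f simp: subset_iff)
  finally show ?thesis .
qed

lemma le_infsum_single:
  fixes f :: "'a \<Rightarrow> real"
  assumes "f summable_on A" "x \<in> A" "\<And>y. y \<in> A \<Longrightarrow> 0 \<le> f y"
  shows "f x \<le> infsum f A"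
proof -
  have "infsum f {x} \<le> infsum f A"
    by (rule infsum_mono_neutral) (use assms in auto)
  thus ?thesis by simp
qed

lemma norm_c0_sq: "(norm (c0 u \<beta>))^2 = (norm (u \<beta>))^2 / mfact \<beta>"
proof -
  have m: "0 < mfact \<beta>" using mfact_ge1[of \<beta>] by simp
  have "norm (c0 u \<beta>) = norm (u \<beta>) / sqrt (mfact \<beta>)" using m by (simp add: c0_def)
  thus ?thesis using m by (simp add: power_divide)
qed

lemma good_L2Q:
  fixes u :: "mindex \<Rightarrow> 'X::real_normed_vector"
  assumes S: "finite S" "valid S" and q: "\<forall>k\<ge>1. q k > 0" and L: "in_L2Q q u"
  shows "\<exists>r>0. good S r (c0 u)"
proof -
  define T where "T = infsum (\<lambda>\<beta>. (qpow q \<beta>)\<^sup>2 * (norm (u \<beta>))\<^sup>2) MJ"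
  define mq where "mq = Min (insert 1 ((\<lambda>p. q (snd p)) ` S))"
  have qS: "\<And>p. p \<in> S \<Longrightarrow> 0 < q (snd p)" using S(2) q by (auto simp: valid_def)
  have mq0: "0 < mq" unfolding mq_def using S(1) qS by (subst Min_gr_iff) auto
  have mqle: "\<And>p. p \<in> S \<Longrightarrow> mq \<le> q (snd p)" unfolding mq_def using S(1) by (intro Min_le) auto
  have w: "(mq^2) ^ deg S \<beta> * (norm (c0 u \<beta>))^2 \<le> T" if b: "\<beta> \<in> BS S" for \<beta>
  proof -
    have qp: "qpow q \<beta> = (\<Prod>p\<in>msupp \<beta>. q (snd p) ^ \<beta> p)"
      unfolding qpow_def by (rule prod.cong) (simp_all add: case_prod_beta)
    have "mq ^ deg S \<beta> \<le> qpow q \<beta>" unfolding qp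
    proof (rule prod_msupp_ge[OF S(1) b mq0])
      fix p n assume "p \<in> S"
      show "mq ^ n \<le> q (snd p) ^ n" using mqle[OF \<open>p \<in> S\<close>] mq0 by (intro power_mono) simp_all
    qed
    hence a0: "(mq ^ deg S \<beta>)^2 \<le> (qpow q \<beta>)^2"
      using mq0 by (intro power_mono) simp_all
    have "(mq^2) ^ deg S \<beta> = (mq ^ deg S \<beta>)^2" by (metis power_mult mult.commute)
    hence a: "(mq^2) ^ deg S \<beta> \<le> (qpow q \<beta>)^2" using a0 by simp
    have bb: "(norm (c0 u \<beta>))^2 \<le> (norm (u \<beta>))^2"
      unfolding norm_c0_sq using mfact_ge1[of \<beta>]
      by (simp add: divide_le_eq) (metis mult.right_neutral mult_left_mono zero_le_power2)
    have "(mq^2) ^ deg S \<beta> * (norm (c0 u \<beta>))^2 \<le> (qpow q \<beta>)^2 * (norm (u \<beta>))^2"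
      using a bb by (intro mult_mono) auto
    also have "\<dots> \<le> T" unfolding T_def
    proof (rule le_infsum_single)
      show "(\<lambda>\<beta>. (qpow q \<beta>)\<^sup>2 * (norm (u \<beta>))\<^sup>2) summable_on MJ" using L unfolding in_L2Q_def .
      show "\<beta> \<in> MJ" using BS_MJ[OF S] b by (rule subsetD)
    qed simp
    finally show ?thesis .
  qed
  have "good S (sqrt (mq^2)) (c0 u)" using mq0 w by (intro good_from_weight) auto
  moreover have "sqrt (mq^2) > 0" using mq0 by simp
  ultimately show ?thesis by blast
qed

lemma powr_pow_eq:
  fixes x :: real assumes "0 < x"
  shows "(x powr a) ^ n = x powr (a * real n)"
proof -
  have "(x powr a) ^ n = (x powr a) powr (real n)" using assms by (simp add: powr_realpow)
  also have "\<dots> = x powr (a * real n)" by (simp add: powr_powr)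
  finally show ?thesis .
qed

lemma good_S:
  fixes u :: "mindex \<Rightarrow> 'X::real_normed_vector"
  assumes S: "finite S" "valid S" and r: "0 \<le> \<rho>" "\<rho> \<le> 1" and g: "0 \<le> \<gamma>" and L: "in_S \<rho> \<gamma> u"
  shows "\<exists>r>0. good S r (c0 u)"
proof -
  define T where "T = infsum (\<lambda>\<beta>. mfact \<beta> powr (-\<rho>) * (\<Prod>(i,k)\<in>msupp \<beta>. (2 * real i * real k) powr (- \<gamma> * real (\<beta> (i,k))))
           * (norm (u \<beta>))\<^sup>2) MJ"
  define x where "x = (\<lambda>p::nat\<times>nat. 2 * real (fst p) * real (snd p))"
  define mS where "mS = Min (insert 1 ((\<lambda>p. x p powr (-\<gamma>)) ` S))"
  have xS: "\<And>p. p \<in> S \<Longrightarrow> 0 < x p" using S(2) by (auto simp: valid_def x_def)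
  have "\<forall>p\<in>S. 0 < x p powr (-\<gamma>)"
  proof
    fix p assume "p \<in> S"
    show "0 < x p powr (-\<gamma>)" using xS[OF \<open>p \<in> S\<close>] by simp
  qed
  hence mS0: "0 < mS" unfolding mS_def using S(1) by (subst Min_gr_iff) auto
  have mSle: "\<And>p. p \<in> S \<Longrightarrow> mS \<le> x p powr (-\<gamma>)" unfolding mS_def using S(1) by (intro Min_le) auto
  have w: "mS ^ deg S \<beta> * (norm (c0 u \<beta>))^2 \<le> T" if b: "\<beta> \<in> BS S" for \<beta>
  proof -
    define P where "P = (\<Prod>(i,k)\<in>msupp \<beta>. (2 * real i * real k) powr (- \<gamma> * real (\<beta> (i,k))))"
    have Pe: "P = (\<Prod>p\<in>msupp \<beta>. x p powr (- \<gamma> * real (\<beta> p)))"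
      unfolding P_def x_def by (rule prod.cong) (simp_all add: case_prod_beta)
    have "mS ^ deg S \<beta> \<le> P" unfolding Pe
    proof (rule prod_msupp_ge[OF S(1) b mS0])
      fix p n assume p: "p \<in> S"
      have "mS ^ n \<le> (x p powr (-\<gamma>)) ^ n" using mSle[OF p] mS0 by (intro power_mono) auto
      also have "\<dots> = x p powr (- \<gamma> * real n)" using xS[OF p] by (rule powr_pow_eq)
      finally show "mS ^ n \<le> x p powr (- \<gamma> * real n)" .
    qed
    moreover have P0: "0 \<le> P" unfolding P_def by (intro prod_nonneg) (auto simp: case_prod_beta)
    moreover have "(norm (c0 u \<beta>))^2 \<le> mfact \<beta> powr (-\<rho>) * (norm (u \<beta>))^2"
    proof -
      have m1: "1 \<le> mfact \<beta>" by (rule mfact_ge1)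
      have "1 / mfact \<beta> = mfact \<beta> powr (-1)" using m1 by (simp add: powr_minus_divide)
      also have "\<dots> \<le> mfact \<beta> powr (-\<rho>)" using m1 r by (intro powr_mono) auto
      finally have "1 / mfact \<beta> \<le> mfact \<beta> powr (-\<rho>)" .
      hence "(1 / mfact \<beta>) * (norm (u \<beta>))^2 \<le> mfact \<beta> powr (-\<rho>) * (norm (u \<beta>))^2"
        by (rule mult_right_mono) simp
      thus ?thesis unfolding norm_c0_sq by simp
    qed
    ultimately have "mS ^ deg S \<beta> * (norm (c0 u \<beta>))^2 \<le> P * (mfact \<beta> powr (-\<rho>) * (norm (u \<beta>))^2)"
      using mS0 by (intro mult_mono) auto
    also have "\<dots> = mfact \<beta> powr (-\<rho>) * P * (norm (u \<beta>))^2" by simp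
    also have "\<dots> \<le> T" unfolding T_def P_def
    proof (rule le_infsum_single)
      show "(\<lambda>\<beta>. mfact \<beta> powr (-\<rho>) * (\<Prod>(i,k)\<in>msupp \<beta>. (2 * real i * real k) powr (- \<gamma> * real (\<beta> (i,k))))
           * (norm (u \<beta>))\<^sup>2) summable_on MJ" using L unfolding in_S_def .
      show "\<beta> \<in> MJ" using BS_MJ[OF S] b by (rule subsetD)
      fix y assume "y \<in> MJ"
      show "0 \<le> mfact y powr (-\<rho>) * (\<Prod>(i,k)\<in>msupp y. (2 * real i * real k) powr (- \<gamma> * real (y (i,k))))
           * (norm (u y))\<^sup>2"
        by (intro mult_nonneg_nonneg prod_nonneg ballI) (simp_all add: case_prod_beta)
    qed
    finally show ?thesis .
  qed
  have "good S (sqrt mS) (c0 u)" using mS0 w by (intro good_from_weight) auto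
  moreover have "sqrt mS > 0" using mS0 by simp
  ultimately show ?thesis by blast
qed


theorem proposition7p12:
  fixes u :: "mindex \<Rightarrow> 'X::banach"
  assumes "(\<exists>q :: nat \<Rightarrow> real. (\<forall>k\<ge>1. q k > 0) \<and> in_L2Q q u)
         \<or> (\<exists>\<rho>::real. 0 \<le> \<rho> \<and> \<rho> \<le> 1 \<and> (\<exists>\<gamma>::real. 0 \<le> \<gamma> \<and> in_S \<rho> \<gamma> u))"
    and "\<alpha> \<in> MJ"
    and "\<forall>p. count (mset ps) p = \<alpha> p"
  shows "\<exists>e>0. pderivs_exist_on (nbhd0 e (msupp \<alpha>)) ps (Stransform u)
           \<and> u \<alpha> = (1 / sqrt (mfact \<alpha>)) *\<^sub>R pderivs ps (Stransform u) (\<lambda>_. 0)"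
proof -
  define S where "S = msupp \<alpha>"
  have Sf: "finite S" using assms(2) by (simp add: MJ_def S_def)
  have Sv: "valid S" unfolding valid_def
  proof
    fix p assume "p \<in> S"
    hence nz: "\<alpha> (fst p, snd p) \<noteq> 0" by (simp add: S_def msupp_def)
    have all: "\<forall>i k. \<alpha> (i,k) \<noteq> 0 \<longrightarrow> 1 \<le> i \<and> 1 \<le> k" using assms(2) by (simp add: MJ_def)
    have "\<alpha> (fst p, snd p) \<noteq> 0 \<longrightarrow> 1 \<le> fst p \<and> 1 \<le> snd p" by (rule spec[OF spec[OF all]])
    thus "1 \<le> fst p \<and> 1 \<le> snd p" using nz by (rule mp)
  qed
  have "\<exists>r>0. good S r (c0 u)"
    using assms(1)
  proof (elim disjE exE conjE)
    fix q :: "nat \<Rightarrow> real" assume "\<forall>k\<ge>1. q k > 0" "in_L2Q q u"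
    thus ?thesis by (rule good_L2Q[OF Sf Sv])
  next
    fix \<rho> \<gamma> :: real assume "0 \<le> \<rho>" "\<rho> \<le> 1" "0 \<le> \<gamma>" "in_S \<rho> \<gamma> u"
    thus ?thesis by (rule good_S[OF Sf Sv])
  qed
  then obtain r where r0: "r > 0" and g: "good S r (c0 u)" by blast
  have cnt: "count (mset ps) = \<alpha>" by (rule ext) (simp add: assms(3))
  have psS: "set ps \<subseteq> S"
  proof
    fix p assume "p \<in> set ps"
    hence "count (mset ps) p > 0" by simp
    thus "p \<in> S" by (simp add: cnt S_def msupp_def)
  qed
  have eq: "Stransform u h = FF S (c0 u) h" if "h \<in> nbhd0 r S" for h
  proof (rule Stransform_eq[OF Sf Sv])
    fix p assume "p \<notin> S"
    have "\<forall>p. p \<notin> S \<longrightarrow> h p = 0" using that unfolding nbhd0_def mem_Collect_eq by (rule conjunct1)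
    hence "p \<notin> S \<longrightarrow> h p = 0" by (rule spec)
    thus "h p = 0" using \<open>p \<notin> S\<close> by (rule mp)
  qed
  have ex: "pderivs_exist_on (nbhd0 r S) ps (Stransform u)"
    by (rule pderivs_exist[OF Sf psS g eq])
  have z: "(\<lambda>_. 0) \<in> nbhd0 r S" using r0 by (simp add: nbhd0_def)
  have m0: "0 < mfact \<alpha>" using mfact_ge1[of \<alpha>] by simp
  have "pderivs ps (Stransform u) (\<lambda>_. 0) = FF S (Dps ps (c0 u)) (\<lambda>_. 0)"
    by (rule pderivs_FF[OF Sf psS g eq z])
  also have "\<dots> = Dps ps (c0 u) (\<lambda>_. 0)" by (rule FF_zero[OF Sf])
  also have "\<dots> = (\<Prod>q\<in>S. fact (0 + count (mset ps) q) / fact 0 :: real) *\<^sub>R c0 u (\<lambda>q. 0 + count (mset ps) q)"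
    by (rule Dps_formula[OF Sf psS])
  also have "\<dots> = mfact \<alpha> *\<^sub>R c0 u \<alpha>"
    by (simp add: cnt mfact_def S_def)
  finally have v: "pderivs ps (Stransform u) (\<lambda>_. 0) = mfact \<alpha> *\<^sub>R c0 u \<alpha>" .
  have "u \<alpha> = (1 / sqrt (mfact \<alpha>)) *\<^sub>R pderivs ps (Stransform u) (\<lambda>_. 0)"
  proof -
    have "(1 / sqrt (mfact \<alpha>)) * mfact \<alpha> * (1 / sqrt (mfact \<alpha>)) = 1"
      using m0 by (simp add: field_simps)
    thus ?thesis unfolding v c0_def by simp
  qed
  with ex r0 show ?thesis unfolding S_def by blast
qed

end
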